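(* There is a function $f'$ with $f'(t,k)=O_t(k^t)$ (i.e., for each fixed $t$ there is $C_t$ with $f'(t,k)\le C_t k^t$ for all $k\ge1$) such that every $\mathcal{O}_k$-free graph $G$ with no $K_{t,t}$ subgraph contains a set $X$ of at most $f'(t,k)$ vertices intersecting every banana of $G$.
   Context: All graphs are finite and simple. Two vertex-disjoint subgraphs are independent if there is no edge between them. A graph $G$ is $\mathcal{O}_k$-free if it does not contain $k$ pairwise vertex-disjoint and pairwise independent cycles; equivalently, $G$ has no induced subgraph isomorphic to a disjoint union of $k$ cycles. A banana in $G$ is a pair of distinct vertices together with at least two internally vertex-disjoint paths between them all of whose internal vertices have degree exactly 2 in $G$; a set $X$ intersects the banana if it contains a vertex of the banana (one of the two vertices or an internal vertex of one of these paths). *)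

theory Defs
  imports Main
begin

definition simple_graph :: "'a set \<Rightarrow> ('a \<Rightarrow> 'a \<Rightarrow> bool) \<Rightarrow> bool" where
  "simple_graph V E \<longleftrightarrow> finite V \<and> (\<forall>x y. E x y \<longrightarrow> x \<in> V \<and> y \<in> V)
     \<and> (\<forall>x y. E x y \<longrightarrow> E y x) \<and> (\<forall>x. \<not> E x x)"

definition degree :: "'a set \<Rightarrow> ('a \<Rightarrow> 'a \<Rightarrow> bool) \<Rightarrow> 'a \<Rightarrow> nat" where
  "degree V E x = card {y \<in> V. E x y}"

definition is_cycle :: "'a set \<Rightarrow> ('a \<Rightarrow> 'a \<Rightarrow> bool) \<Rightarrow> 'a list \<Rightarrow> bool" where
  "is_cycle V E c \<longleftrightarrow> distinct c \<and> length c \<ge> 3 \<and> set c \<subseteq> V \<and>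
     (\<forall>i < length c. E (c ! i) (c ! ((i + 1) mod length c)))"

definition has_Ok :: "'a set \<Rightarrow> ('a \<Rightarrow> 'a \<Rightarrow> bool) \<Rightarrow> nat \<Rightarrow> bool" where
  "has_Ok V E k \<longleftrightarrow> (\<exists>cs :: nat \<Rightarrow> 'a list.
     (\<forall>i < k. is_cycle V E (cs i)) \<and>
     (\<forall>i < k. \<forall>j < k. i \<noteq> j \<longrightarrow>
        set (cs i) \<inter> set (cs j) = {} \<and>
        (\<forall>x \<in> set (cs i). \<forall>y \<in> set (cs j). \<not> E x y)))"

definition Ok_free :: "'a set \<Rightarrow> ('a \<Rightarrow> 'a \<Rightarrow> bool) \<Rightarrow> nat \<Rightarrow> bool" where
  "Ok_free V E k \<longleftrightarrow> \<not> has_Ok V E k"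

definition has_Ktt :: "'a set \<Rightarrow> ('a \<Rightarrow> 'a \<Rightarrow> bool) \<Rightarrow> nat \<Rightarrow> bool" where
  "has_Ktt V E t \<longleftrightarrow> (\<exists>A B. A \<subseteq> V \<and> B \<subseteq> V \<and> A \<inter> B = {} \<and>
     card A = t \<and> card B = t \<and> finite A \<and> finite B \<and> (\<forall>a \<in> A. \<forall>b \<in> B. E a b))"

definition is_path :: "'a set \<Rightarrow> ('a \<Rightarrow> 'a \<Rightarrow> bool) \<Rightarrow> 'a \<Rightarrow> 'a \<Rightarrow> 'a list \<Rightarrow> bool" where
  "is_path V E u v p \<longleftrightarrow> p \<noteq> [] \<and> hd p = u \<and> last p = v \<and> distinct p \<and> set p \<subseteq> V \<and>
     (\<forall>i. i + 1 < length p \<longrightarrow> E (p ! i) (p ! (i + 1)))"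

definition internal :: "'a list \<Rightarrow> 'a set" where
  "internal p = set (butlast (tl p))"

definition banana :: "'a set \<Rightarrow> ('a \<Rightarrow> 'a \<Rightarrow> bool) \<Rightarrow> 'a \<Rightarrow> 'a \<Rightarrow> 'a list set \<Rightarrow> bool" where
  "banana V E u v P \<longleftrightarrow> u \<noteq> v \<and> finite P \<and> card P \<ge> 2 \<and>
     (\<forall>p \<in> P. is_path V E u v p) \<and>
     (\<forall>p \<in> P. \<forall>q \<in> P. p \<noteq> q \<longrightarrow> internal p \<inter> internal q = {}) \<and>
     (\<forall>p \<in> P. \<forall>x \<in> internal p. degree V E x = 2)"

definition banana_vertices :: "'a \<Rightarrow> 'a \<Rightarrow> 'a list set \<Rightarrow> 'a set" where
  "banana_vertices u v P = {u, v} \<union> (\<Union>p \<in> P. internal p)"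

end

theory Submission
  imports Defs Complex_Main
begin


lemma succ_nth: "successively P xs \<longleftrightarrow> (\<forall>i. i+1 < length xs \<longrightarrow> P (xs!i) (xs!(i+1)))"
proof (induction P xs rule: successively.induct)
  case (3 P x y xs)
  show ?case
  proof
    assume "successively P (x # y # xs)"
    with 3 show "\<forall>i. i+1 < length (x#y#xs) \<longrightarrow> P ((x#y#xs)!i) ((x#y#xs)!(i+1))"
      by (auto simp: nth_Cons split: nat.split)
  next
    assume h: "\<forall>i. i+1 < length (x#y#xs) \<longrightarrow> P ((x#y#xs)!i) ((x#y#xs)!(i+1))"
    have "P x y" using h[rule_format, of 0] by simp
    moreover have "\<forall>i. i+1 < length (y#xs) \<longrightarrow> P ((y#xs)!i) ((y#xs)!(i+1))"
    proof (intro allI impI)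
      fix i assume "i+1 < length (y#xs)"
      then show "P ((y#xs)!i) ((y#xs)!(i+1))" using h[rule_format, of "Suc i"] by simp
    qed
    ultimately show "successively P (x # y # xs)" using 3 by simp
  qed
qed auto

lemma path_succ: "is_path V E u v p \<Longrightarrow> successively E p"
  unfolding is_path_def succ_nth by auto

lemma path_decomp:
  assumes "is_path V E u v p" "u \<noteq> v"
  shows "p = u # butlast (tl p) @ [v]"
proof -
  obtain r where p: "p = u # r" using assms unfolding is_path_def
    by (cases p) auto
  have "r \<noteq> []" using assms p unfolding is_path_def by auto
  hence "r = butlast r @ [last r]" by simp
  moreover have "last r = v" using assms p \<open>r \<noteq> []\<close> unfolding is_path_def by auto
  ultimately show ?thesis using p by simp
qed

lemma cycle_intro:
  assumes "distinct c" "length c \<ge> 3" "set c \<subseteq> V" "successively E c" "E (last c) (hd c)"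
  shows "is_cycle V E c"
  unfolding is_cycle_def
proof (intro conjI allI impI)
  fix i assume i: "i < length c"
  show "E (c ! i) (c ! ((i + 1) mod length c))"
  proof (cases "i + 1 < length c")
    case True then show ?thesis using assms(4) unfolding succ_nth by simp
  next
    case False
    hence i1: "i + 1 = length c" using i by simp
    hence "i = length c - 1" by simp
    have "c ! i = last c" using assms(2) \<open>i = length c - 1\<close> by (subst last_conv_nth) auto
    moreover have "c ! 0 = hd c" using assms(2) by (subst hd_conv_nth) auto
    moreover have "(i + 1) mod length c = 0" using i1 by simp
    ultimately show ?thesis using assms(5) by simp
  qed
qed (use assms in auto)

definition Dset :: "'a set \<Rightarrow> ('a \<Rightarrow> 'a \<Rightarrow> bool) \<Rightarrow> 'a set" where
  "Dset V E = {x\<in>V. degree V E x \<noteq> 2}"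

lemma banana_cycle_aux:
  assumes G: "simple_graph V E"
    and p: "is_path V E u v p" and q: "is_path V E u v q" and uv: "u \<noteq> v"
    and dis: "internal p \<inter> internal q = {}" and lp: "length p \<ge> 3"
    and deg: "\<forall>x \<in> internal p \<union> internal q. degree V E x = 2"
  shows "\<exists>c. is_cycle V E c \<and> set c \<subseteq> {u,v} \<union> internal p \<union> internal q
            \<and> set c \<inter> Dset V E \<subseteq> {u,v}"
proof -
  define l where "l = butlast (tl p)"
  define m where "m = butlast (tl q)"
  have pe: "p = u # l @ [v]" using path_decomp[OF p uv] l_def by simp
  have qe: "q = u # m @ [v]" using path_decomp[OF q uv] m_def by simp
  have sym: "\<And>x y. E x y \<Longrightarrow> E y x" using G unfolding simple_graph_def by blast
  have dp: "distinct p" "distinct q" using p q unfolding is_path_def by auto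
  have sp: "successively E p" "successively E q" using path_succ p q by auto
  have il: "internal p = set l" "internal q = set m" unfolding internal_def l_def m_def by auto
  define c where "c = p @ rev m"
  have "distinct c" using dp dis il unfolding c_def by (auto simp: pe qe)
  moreover have "length c \<ge> 3" using lp unfolding c_def by simp
  moreover have "set c \<subseteq> V" using p q unfolding c_def is_path_def by (auto simp: qe)
  moreover have "successively E c"
  proof -
    have sm: "successively E (m @ [v])" using sp(2) qe by (simp add: successively_Cons)
    hence "successively E m" by (simp add: successively_append_iff)
    hence "successively E (rev m)" by (auto intro: successively_mono sym)
    moreover have "m \<noteq> [] \<Longrightarrow> E v (last m)" using sm sym by (simp add: successively_append_iff)
    moreover have "rev m = [] \<or> E (last p) (hd (rev m))"
      using \<open>m \<noteq> [] \<Longrightarrow> E v (last m)\<close> by (auto simp: pe hd_rev)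
    ultimately show ?thesis using sp(1) unfolding c_def
      by (subst successively_append_iff) blast
  qed
  moreover have "E (last c) (hd c)"
  proof (cases "m = []")
    case True
    then show ?thesis using sp(2) qe sym unfolding c_def by (simp add: pe)
  next
    case False
    have "E u (hd m)" using sp(2) qe False by (cases m) auto
    then show ?thesis using False sym unfolding c_def by (simp add: pe last_rev)
  qed
  ultimately have cyc: "is_cycle V E c" by (rule cycle_intro)
  have sc: "set c = {u,v} \<union> internal p \<union> internal q" unfolding c_def il by (auto simp: pe)
  have "set c \<inter> Dset V E \<subseteq> {u,v}" using deg unfolding sc Dset_def by auto
  with cyc sc show ?thesis by blast
qed

lemma banana_cycle:
  assumes G: "simple_graph V E" and b: "banana V E u v P"
  shows "\<exists>c. is_cycle V E c \<and> set c \<subseteq> banana_vertices u v P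
            \<and> card (set c \<inter> Dset V E) \<le> 2"
proof -
  from b have "card P \<ge> 2" "finite P" unfolding banana_def by auto
  then obtain p q where pq: "p \<in> P" "q \<in> P" "p \<noteq> q"
  proof -
    have "P \<noteq> {}" using \<open>card P \<ge> 2\<close> by (rule_tac ccontr) simp
    then obtain p where p: "p \<in> P" by blast
    have "card (P - {p}) \<ge> 1" using \<open>card P \<ge> 2\<close> \<open>finite P\<close> p by (simp add: card_Diff_singleton)
    hence "P - {p} \<noteq> {}" by (intro notI) simp
    then obtain q where "q \<in> P - {p}" by blast
    with p show ?thesis using that by blast
  qed
  have uv: "u \<noteq> v" using b unfolding banana_def by auto
  have pp: "is_path V E u v p" "is_path V E u v q" using b pq unfolding banana_def by auto
  have dis: "internal p \<inter> internal q = {}" using b pq unfolding banana_def by auto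
  have deg: "\<forall>x \<in> internal p \<union> internal q. degree V E x = 2" using b pq unfolding banana_def by auto
  have sub: "{u,v} \<union> internal p \<union> internal q \<subseteq> banana_vertices u v P"
    using pq unfolding banana_vertices_def by auto
  have "length p \<ge> 3 \<or> length q \<ge> 3"
  proof (rule ccontr)
    assume "\<not> ?thesis"
    hence "length p \<le> 2" "length q \<le> 2" by auto
    obtain l1 where l1: "p = u # l1 @ [v]" using path_decomp[OF pp(1) uv] by blast
    obtain l2 where l2: "q = u # l2 @ [v]" using path_decomp[OF pp(2) uv] by blast
    have "l1 = []" using \<open>length p \<le> 2\<close> l1 by simp
    moreover have "l2 = []" using \<open>length q \<le> 2\<close> l2 by simp
    ultimately have "p = [u,v]" "q = [u,v]" using l1 l2 by simp_all
    with pq show False by simp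
  qed
  then obtain c where c: "is_cycle V E c" "set c \<subseteq> {u,v} \<union> internal p \<union> internal q"
      "set c \<inter> Dset V E \<subseteq> {u,v}"
  proof
    assume "length p \<ge> 3" then show ?thesis using banana_cycle_aux[OF G pp(1) pp(2) uv dis _ deg] that by blast
  next
    assume "length q \<ge> 3"
    moreover have "internal q \<inter> internal p = {}" using dis by blast
    moreover have "\<forall>x \<in> internal q \<union> internal p. degree V E x = 2" using deg by blast
    ultimately obtain c where "is_cycle V E c" "set c \<subseteq> {u,v} \<union> internal q \<union> internal p"
      "set c \<inter> Dset V E \<subseteq> {u,v}" using banana_cycle_aux[OF G pp(2) pp(1) uv] by blast
    moreover have "{u,v} \<union> internal q \<union> internal p = {u,v} \<union> internal p \<union> internal q" by blast
    ultimately show ?thesis using that by simp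
  qed
  have "card (set c \<inter> Dset V E) \<le> card {u,v}" using c(3) by (intro card_mono) auto
  also have "\<dots> \<le> 2" by (simp add: card_insert_if)
  finally show ?thesis using c sub by blast
qed



lemma cyc_facts:
  assumes "is_cycle V E c"
  shows "distinct c" "length c \<ge> 3" "set c \<subseteq> V"
    "\<And>i. i < length c \<Longrightarrow> E (c ! i) (c ! ((i + 1) mod length c))"
  using assms unfolding is_cycle_def by auto

lemma nbr_closed:
  assumes G: "simple_graph V E" and c: "is_cycle V E c" and x: "x \<in> set c"
    and dx: "degree V E x = 2" and e: "E x y"
  shows "y \<in> set c"
proof -
  note cf = cyc_facts[OF c]
  define n where "n = length c"
  have n3: "n \<ge> 3" using cf n_def by simp
  obtain i where i: "i < n" "c ! i = x" using x n_def by (auto simp: in_set_conv_nth)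
  have sym: "\<And>x y. E x y \<Longrightarrow> E y x" and fin: "finite V"
    and inV: "\<And>x y. E x y \<Longrightarrow> y \<in> V"
    using G unfolding simple_graph_def by blast+
  define ia where "ia = (i + 1) mod n"
  define ib where "ib = (if i = 0 then n - 1 else i - 1)"
  have ia: "ia < n" using n3 unfolding ia_def by simp
  have ib: "ib < n" "(ib + 1) mod n = i" using n3 i unfolding ib_def by auto
  have Ea: "E x (c ! ia)" using cf(4)[of i] i n_def ia_def by simp
  have Eb: "E x (c ! ib)" using cf(4)[of ib] ib n_def i sym by simp
  have "ia \<noteq> ib" using n3 i unfolding ia_def ib_def
    by (cases "i + 1 = n") (auto simp: mod_if)
  hence ab: "c ! ia \<noteq> c ! ib" using cf(1) ia ib n_def by (simp add: nth_eq_iff_index_eq)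
  have sub: "{c ! ia, c ! ib} \<subseteq> {z\<in>V. E x z}" using Ea Eb inV by auto
  have "card {z\<in>V. E x z} = 2" using dx unfolding degree_def .
  moreover have "card {c ! ia, c ! ib} = 2" using ab by simp
  ultimately have "{c ! ia, c ! ib} = {z\<in>V. E x z}"
    using sub fin by (intro card_subset_eq) auto
  moreover have "y \<in> {z\<in>V. E x z}" using e inV by auto
  ultimately have "y \<in> {c ! ia, c ! ib}" by simp
  thus ?thesis using ia ib n_def by auto
qed

lemma walk:
  assumes G: "simple_graph V E" and c: "is_cycle V E c" and c': "is_cycle V E c'"
    and d2: "\<forall>x \<in> set c \<inter> set c'. degree V E x = 2"
    and ne: "set c \<inter> set c' \<noteq> {}"
  shows "set c \<subseteq> set c'"
proof -
  note cf = cyc_facts[OF c]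
  define n where "n = length c"
  have n3: "n \<ge> 3" using cf n_def by simp
  obtain y where y: "y \<in> set c" "y \<in> set c'" using ne by blast
  obtain i where i0: "i < n" "c ! i = y" using y(1) n_def by (auto simp: in_set_conv_nth)
  hence i: "i < n" "c ! i \<in> set c'" using y by auto
  have step: "c ! ((i + j) mod n) \<in> set c'" for j
  proof (induction j)
    case 0 then show ?case using i by simp
  next
    case (Suc j)
    define a where "a = (i + j) mod n"
    have a: "a < n" using n3 a_def by simp
    have "c ! a \<in> set c" using a n_def by simp
    hence "degree V E (c ! a) = 2" using d2 Suc a_def by blast
    moreover have "E (c ! a) (c ! ((a + 1) mod n))" using cf(4) a n_def by simp
    ultimately have "c ! ((a + 1) mod n) \<in> set c'"
      using nbr_closed[OF G c'] Suc a_def by blast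
    moreover have "(a + 1) mod n = (i + Suc j) mod n" unfolding a_def by (simp add: mod_Suc_eq)
    ultimately show ?case by simp
  qed
  show ?thesis
  proof
    fix y assume "y \<in> set c"
    then obtain m where m: "m < n" "c ! m = y" using n_def by (auto simp: in_set_conv_nth)
    have "(i + (m + n - i)) mod n = m" using i m by simp
    thus "y \<in> set c'" using step[of "m + n - i"] m by simp
  qed
qed

lemma sep:
  assumes G: "simple_graph V E" and c: "is_cycle V E c" and c': "is_cycle V E c'"
    and kd: "set c \<inter> set c' \<inter> Dset V E = {}"
    and ke: "\<forall>x \<in> set c \<inter> Dset V E. \<forall>y \<in> set c' \<inter> Dset V E. \<not> E x y"
    and neq: "set c \<noteq> set c'"
  shows "set c \<inter> set c' = {} \<and> (\<forall>x\<in>set c. \<forall>y\<in>set c'. \<not> E x y)"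
proof -
  have sym: "\<And>x y. E x y \<Longrightarrow> E y x" using G unfolding simple_graph_def by blast
  have V: "set c \<subseteq> V" "set c' \<subseteq> V" using cyc_facts(3)[OF c] cyc_facts(3)[OF c'] by auto
  have d2: "\<forall>x \<in> set c \<inter> set c'. degree V E x = 2" using kd V unfolding Dset_def by auto
  have d2': "\<forall>x \<in> set c' \<inter> set c. degree V E x = 2" using d2 by blast
  have disj: "set c \<inter> set c' = {}"
  proof (rule ccontr)
    assume h: "set c \<inter> set c' \<noteq> {}"
    hence "set c \<subseteq> set c'" using walk[OF G c c' d2] by blast
    moreover have "set c' \<subseteq> set c" using walk[OF G c' c d2'] h by blast
    ultimately show False using neq by blast
  qed
  moreover have "\<forall>x\<in>set c. \<forall>y\<in>set c'. \<not> E x y"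
  proof (intro ballI notI)
    fix x y assume x: "x \<in> set c" and y: "y \<in> set c'" and e: "E x y"
    have "x \<in> Dset V E"
    proof (rule ccontr)
      assume "x \<notin> Dset V E"
      hence "degree V E x = 2" using x V unfolding Dset_def by auto
      hence "y \<in> set c" using nbr_closed[OF G c x _ e] by blast
      thus False using disj y by blast
    qed
    moreover have "y \<in> Dset V E"
    proof (rule ccontr)
      assume "y \<notin> Dset V E"
      hence "degree V E y = 2" using y V unfolding Dset_def by auto
      hence "x \<in> set c'" using nbr_closed[OF G c' y _ sym[OF e]] by blast
      thus False using disj x by blast
    qed
    ultimately show False using ke x y e by blast
  qed
  ultimately show ?thesis by blast
qed

lemma mk_Ok:
  assumes fin: "finite I" and card: "card I = k"
    and cyc: "\<forall>i\<in>I. is_cycle V E (cy i)"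
    and pw: "\<forall>i\<in>I. \<forall>j\<in>I. i \<noteq> j \<longrightarrow> set (cy i) \<inter> set (cy j) = {} \<and>
              (\<forall>x \<in> set (cy i). \<forall>y \<in> set (cy j). \<not> E x y)"
  shows "has_Ok V E k"
proof -
  obtain h where h: "bij_betw h {0..<card I} I" using ex_bij_betw_nat_finite[OF fin] by blast
  have hi: "h i \<in> I" if "i < k" for i
    using bij_betw_apply[OF h] that card by simp
  have inj: "h i \<noteq> h j" if "i < k" "j < k" "i \<noteq> j" for i j
  proof
    assume "h i = h j"
    moreover have "inj_on h {0..<card I}" using h by (rule bij_betw_imp_inj_on)
    ultimately show False using that card by (auto dest: inj_onD)
  qed
  have "\<forall>i<k. is_cycle V E (cy (h i))" using hi cyc by blast
  moreover have "\<forall>i<k. \<forall>j<k. i \<noteq> j \<longrightarrow> set (cy (h i)) \<inter> set (cy (h j)) = {} \<and>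
              (\<forall>x \<in> set (cy (h i)). \<forall>y \<in> set (cy (h j)). \<not> E x y)"
  proof (intro allI impI)
    fix i j assume "i < k" "j < k" "i \<noteq> j"
    hence "h i \<in> I" "h j \<in> I" "h i \<noteq> h j" using hi inj by auto
    thus "set (cy (h i)) \<inter> set (cy (h j)) = {} \<and>
              (\<forall>x \<in> set (cy (h i)). \<forall>y \<in> set (cy (h j)). \<not> E x y)" using pw by blast
  qed
  ultimately show ?thesis unfolding has_Ok_def by (intro exI[of _ "\<lambda>i. cy (h i)"]) simp
qed



definition nb :: "'a set \<Rightarrow> ('a \<Rightarrow> 'a \<Rightarrow> bool) \<Rightarrow> 'a \<Rightarrow> 'a set" where
  "nb W E v = {y\<in>W. E v y}"

lemma Kbound:
  assumes G: "simple_graph V E" and nK: "\<not> has_Ktt V E t" and W: "W \<subseteq> V"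
    and T: "T \<subseteq> W" "card T = t" and t: "t \<ge> 1"
  shows "card {v\<in>W. T \<subseteq> nb W E v} \<le> t - 1"
proof (rule ccontr)
  assume "\<not> ?thesis"
  hence "t \<le> card {v\<in>W. T \<subseteq> nb W E v}" by simp
  then obtain B where B: "B \<subseteq> {v\<in>W. T \<subseteq> nb W E v}" "card B = t" "finite B"
    by (rule obtain_subset_with_card_n)
  have sym: "\<And>x y. E x y \<Longrightarrow> E y x" and irr: "\<And>x. \<not> E x x"
    using G unfolding simple_graph_def by blast+
  have fT: "finite T" using T t by (metis card.infinite not_one_le_zero)
  have "T \<inter> B = {}"
  proof (rule ccontr)
    assume "T \<inter> B \<noteq> {}"
    then obtain v where "v \<in> T" "v \<in> B" by blast
    hence "v \<in> nb W E v" using B by blast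
    thus False using irr unfolding nb_def by blast
  qed
  moreover have "\<forall>a\<in>T. \<forall>b\<in>B. E a b"
  proof (intro ballI)
    fix a b assume "a \<in> T" "b \<in> B"
    hence "a \<in> nb W E b" using B by blast
    thus "E a b" using sym unfolding nb_def by blast
  qed
  ultimately have "has_Ktt V E t" unfolding has_Ktt_def
    using T W B fT by (intro exI[of _ T] exI[of _ B]) auto
  thus False using nK by simp
qed

lemma count:
  assumes G: "simple_graph V E" and nK: "\<not> has_Ktt V E t" and W: "W \<subseteq> V" and t: "t \<ge> 1"
  shows "(\<Sum>v\<in>W. card (nb W E v) choose t) \<le> (t - 1) * (card W choose t)"
proof -
  have fW: "finite W" using G W unfolding simple_graph_def by (metis finite_subset)
  define Ts where "Ts = {T. T \<subseteq> W \<and> card T = t}"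
  have fTs: "finite Ts" unfolding Ts_def using fW by simp
  have nbW: "nb W E v \<subseteq> W" for v unfolding nb_def by auto
  have "card (nb W E v) choose t = card {T\<in>Ts. T \<subseteq> nb W E v}" for v
  proof -
    have "{T\<in>Ts. T \<subseteq> nb W E v} = {T. T \<subseteq> nb W E v \<and> card T = t}"
      unfolding Ts_def using nbW by blast
    thus ?thesis using n_subsets[of "nb W E v" t] finite_subset[OF nbW fW] by simp
  qed
  hence "(\<Sum>v\<in>W. card (nb W E v) choose t) = (\<Sum>v\<in>W. card {T\<in>Ts. T \<subseteq> nb W E v})" by simp
  also have "\<dots> = (\<Sum>v\<in>W. \<Sum>T\<in>{T\<in>Ts. T \<subseteq> nb W E v}. (1::nat))" by simp
  also have "\<dots> = (\<Sum>T\<in>Ts. \<Sum>v\<in>{v\<in>W. T \<subseteq> nb W E v}. (1::nat))"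
    using sum.swap_restrict[OF fW fTs, of "\<lambda>v T. (1::nat)" "\<lambda>v T. T \<subseteq> nb W E v"] by simp
  also have "\<dots> = (\<Sum>T\<in>Ts. card {v\<in>W. T \<subseteq> nb W E v})" by simp
  also have "\<dots> \<le> (\<Sum>T\<in>Ts. t - 1)"
  proof (rule sum_mono)
    fix T assume "T \<in> Ts"
    thus "card {v\<in>W. T \<subseteq> nb W E v} \<le> t - 1"
      using Kbound[OF G nK W _ _ t] unfolding Ts_def by blast
  qed
  also have "\<dots> = (t - 1) * card Ts" by simp
  also have "card Ts = card W choose t" unfolding Ts_def using n_subsets[OF fW] by simp
  finally show ?thesis by simp
qed

lemma pow_choose:
  fixes D t :: nat
  assumes "t \<le> D" "t \<ge> 1"
  shows "D ^ t \<le> t ^ t * (D choose t)"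
proof -
  have "(real D / real t) ^ t \<le> real (D choose t)"
    using binomial_ge_n_over_k_pow_k[OF assms(1), where 'a=real] by simp
  hence "real D ^ t / real t ^ t \<le> real (D choose t)" by (simp add: power_divide)
  moreover have "real t ^ t > 0" using assms by simp
  ultimately have "real D ^ t \<le> real t ^ t * real (D choose t)"
    by (simp add: divide_le_eq mult.commute)
  hence "real (D ^ t) \<le> real (t ^ t * (D choose t))" by simp
  thus ?thesis by (simp only: of_nat_le_iff)
qed

lemma heavy:
  assumes G: "simple_graph V E" and nK: "\<not> has_Ktt V E t" and W: "W \<subseteq> V" and t: "t \<ge> 1"
    and D: "t \<le> D"
  shows "card {v\<in>W. D \<le> card (nb W E v)} * D ^ t \<le> t ^ t * (t - 1) * card W ^ t"
proof -
  have fW: "finite W" using G W unfolding simple_graph_def by (metis finite_subset)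
  define H where "H = {v\<in>W. D \<le> card (nb W E v)}"
  have "card H * (D choose t) = (\<Sum>v\<in>H. D choose t)" by simp
  also have "\<dots> \<le> (\<Sum>v\<in>H. card (nb W E v) choose t)"
    by (rule sum_mono) (simp add: H_def binomial_right_mono)
  also have "\<dots> \<le> (\<Sum>v\<in>W. card (nb W E v) choose t)"
    by (rule sum_mono2) (use fW H_def in auto)
  also have "\<dots> \<le> (t - 1) * (card W choose t)" by (rule count[OF G nK W t])
  also have "\<dots> \<le> (t - 1) * card W ^ t"
  proof (cases "t \<le> card W")
    case True then show ?thesis by (simp add: binomial_le_pow)
  next
    case False then show ?thesis by (simp add: binomial_eq_0)
  qed
  finally have a: "card H * (D choose t) \<le> (t - 1) * card W ^ t" .
  have "card H * D ^ t \<le> card H * (t ^ t * (D choose t))"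
    using pow_choose[OF D t] by simp
  also have "\<dots> = t ^ t * (card H * (D choose t))" by simp
  also have "\<dots> \<le> t ^ t * ((t - 1) * card W ^ t)" using a by simp
  finally show ?thesis unfolding H_def by (simp add: mult.assoc)
qed



lemma arith1:
  fixes t Y :: nat
  assumes t: "t \<ge> 1" and Y: "Y \<ge> 1"
    and h: "Y ^ t * (2 * t ^ 2 * Y ^ (t - 1)) ^ t \<le> t ^ t * (t - 1) * (2 * Y ^ t) ^ t"
  shows False
proof -
  define A where "A = 2 * t ^ 2"
  have tt: "t + (t - 1) * t = t * t" using t by (cases t) auto
  have "Y ^ t * (A * Y ^ (t - 1)) ^ t = Y ^ t * (A ^ t * (Y ^ (t - 1)) ^ t)"
    by (simp only: power_mult_distrib)
  also have "(Y ^ (t - 1)) ^ t = Y ^ ((t - 1) * t)" by (simp only: power_mult)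
  also have "Y ^ t * (A ^ t * Y ^ ((t - 1) * t)) = A ^ t * (Y ^ t * Y ^ ((t - 1) * t))" by simp
  also have "Y ^ t * Y ^ ((t - 1) * t) = Y ^ (t * t)" by (simp only: power_add[symmetric] tt)
  finally have l: "Y ^ t * (A * Y ^ (t - 1)) ^ t = A ^ t * Y ^ (t * t)" .
  have "(2 * Y ^ t) ^ t = 2 ^ t * (Y ^ t) ^ t" by (simp only: power_mult_distrib)
  also have "(Y ^ t) ^ t = Y ^ (t * t)" by (simp only: power_mult)
  finally have r: "t ^ t * (t - 1) * (2 * Y ^ t) ^ t = (t ^ t * (t - 1) * 2 ^ t) * Y ^ (t * t)" by simp
  have h': "Y ^ t * (A * Y ^ (t - 1)) ^ t \<le> t ^ t * (t - 1) * (2 * Y ^ t) ^ t"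
    using h unfolding A_def .
  have "A ^ t * Y ^ (t * t) \<le> (t ^ t * (t - 1) * 2 ^ t) * Y ^ (t * t)"
    using h' unfolding l r .
  moreover have "Y ^ (t * t) > 0" using Y by simp
  ultimately have "A ^ t \<le> t ^ t * (t - 1) * 2 ^ t" by simp
  moreover have "A ^ t = (2 ^ t * t ^ t) * t ^ t"
    unfolding A_def by (simp add: power_mult_distrib power2_eq_square)
  ultimately have "(2 ^ t * t ^ t) * t ^ t \<le> (2 ^ t * t ^ t) * (t - 1)" by (simp add: mult.commute mult.left_commute)
  moreover have "2 ^ t * t ^ t > 0" using t by simp
  ultimately have "t ^ t \<le> t - 1" by simp
  moreover have "t \<le> t ^ t" using t by (simp add: self_le_power)
  ultimately show False using t by simp
qed

lemma arith2:
  fixes t k :: nat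
  assumes t: "t \<ge> 1"
  shows "k ^ t + Suc k ^ (t - 1) \<le> Suc k ^ t"
proof -
  have "k ^ t = k * k ^ (t - 1)" using t by (cases t) auto
  also have "\<dots> \<le> k * Suc k ^ (t - 1)" by (simp add: power_mono)
  finally have "k ^ t + Suc k ^ (t - 1) \<le> Suc k * Suc k ^ (t - 1)" by simp
  also have "Suc k * Suc k ^ (t - 1) = Suc k ^ t" using t by (cases t) auto
  finally show ?thesis .
qed

lemma arith3:
  fixes t k :: nat
  assumes t: "t \<ge> 1"
  shows "1 + 2 * (2 * t ^ 2 * ((4 * t ^ 2 + 1) * Suc k) ^ (t - 1)) + (4 * t ^ 2 + 1) ^ t * k ^ t
         \<le> (4 * t ^ 2 + 1) ^ t * Suc k ^ t"
proof -
  define X where "X = 4 * t ^ 2 + 1"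
  define Z where "Z = (X * Suc k) ^ (t - 1)"
  have Z1: "Z \<ge> 1" unfolding Z_def X_def by simp
  obtain n where n: "t = Suc n" using t by (cases t) auto
  have "(X * Suc k) ^ n = X ^ n * Suc k ^ n" by (simp only: power_mult_distrib)
  hence "X ^ t * Suc k ^ (t - 1) = X * Z"
    unfolding Z_def n by simp
  also have "\<dots> = 2 * (2 * t ^ 2 * Z) + Z" unfolding X_def by (simp add: algebra_simps)
  finally have a: "X ^ t * Suc k ^ (t - 1) = 2 * (2 * t ^ 2 * Z) + Z" .
  have "X ^ t * (k ^ t + Suc k ^ (t - 1)) \<le> X ^ t * Suc k ^ t"
    using arith2[OF t, of k] by simp
  hence "X ^ t * k ^ t + X ^ t * Suc k ^ (t - 1) \<le> X ^ t * Suc k ^ t" by (simp add: algebra_simps)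
  with a Z1 have "1 + 2 * (2 * t ^ 2 * Z) + X ^ t * k ^ t \<le> X ^ t * Suc k ^ t" by simp
  thus ?thesis unfolding X_def Z_def .
qed



definition blockfam :: "'a set \<Rightarrow> 'a set set \<Rightarrow> bool" where
  "blockfam V M \<longleftrightarrow> finite M \<and> (\<forall>b\<in>M. b \<subseteq> V \<and> b \<noteq> {} \<and> card b \<le> 2) \<and>
     (\<forall>a\<in>M. \<forall>b\<in>M. a \<noteq> b \<longrightarrow> a \<inter> b = {})"

lemma blockfam_sub:
  assumes "blockfam V M" "M' \<subseteq> M" shows "blockfam V M'"
proof -
  have a: "finite M" "\<forall>b\<in>M. b \<subseteq> V \<and> b \<noteq> {} \<and> card b \<le> 2"
    "\<forall>a\<in>M. \<forall>b\<in>M. a \<noteq> b \<longrightarrow> a \<inter> b = {}"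
    using assms(1) unfolding blockfam_def by simp_all
  have "finite M'" using a(1) assms(2) by (rule finite_subset[rotated])
  moreover have "\<forall>b\<in>M'. b \<subseteq> V \<and> b \<noteq> {} \<and> card b \<le> 2"
  proof
    fix b assume "b \<in> M'" hence "b \<in> M" using assms(2) by blast
    thus "b \<subseteq> V \<and> b \<noteq> {} \<and> card b \<le> 2" using a(2) by blast
  qed
  moreover have "\<forall>a\<in>M'. \<forall>b\<in>M'. a \<noteq> b \<longrightarrow> a \<inter> b = {}"
  proof (intro ballI impI)
    fix a b assume "a \<in> M'" "b \<in> M'" "a \<noteq> b"
    moreover have "a \<in> M" "b \<in> M" using \<open>a \<in> M'\<close> \<open>b \<in> M'\<close> assms(2) by (auto dest: subsetD)
    ultimately show "a \<inter> b = {}" using a(3) by simp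
  qed
  ultimately show ?thesis unfolding blockfam_def by simp
qed

lemma comb:
  assumes G: "simple_graph V E" and nK: "\<not> has_Ktt V E t" and t: "t \<ge> 1"
  shows "blockfam V M \<Longrightarrow> card M \<ge> (4 * t ^ 2 + 1) ^ t * k ^ t \<Longrightarrow>
    \<exists>S\<subseteq>M. card S = k \<and> (\<forall>a\<in>S. \<forall>b\<in>S. a \<noteq> b \<longrightarrow> (\<forall>x\<in>a. \<forall>y\<in>b. \<not> E x y))"
proof (induction k arbitrary: M)
  case 0 then show ?case by (intro exI[of _ "{}"]) auto
next
  case (Suc k)
  have sym: "\<And>x y. E x y \<Longrightarrow> E y x" and fV: "finite V"
    using G unfolding simple_graph_def by blast+
  define X where "X = 4 * t ^ 2 + 1"
  define Y where "Y = X * Suc k"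
  define N where "N = Y ^ t"
  define D where "D = 2 * t ^ 2 * Y ^ (t - 1)"
  have Y1: "Y \<ge> 1" unfolding Y_def X_def by simp
  have NX: "N = X ^ t * Suc k ^ t" unfolding N_def Y_def by (simp only: power_mult_distrib)
  hence "N \<le> card M" using Suc.prems(2) unfolding X_def by simp
  then obtain M0 where M0: "M0 \<subseteq> M" "card M0 = N" "finite M0" by (rule obtain_subset_with_card_n)
  have bf0: "blockfam V M0" using blockfam_sub[OF Suc.prems(1) M0(1)] .
  have bb: "\<forall>b\<in>M0. b \<subseteq> V \<and> b \<noteq> {} \<and> card b \<le> 2"
    and dj: "\<forall>a\<in>M0. \<forall>b\<in>M0. a \<noteq> b \<longrightarrow> a \<inter> b = {}"
    using bf0 unfolding blockfam_def by simp_all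
  define W where "W = \<Union>M0"
  have WV: "W \<subseteq> V" using bb unfolding W_def by auto
  have "card W \<le> (\<Sum>b\<in>M0. card b)" unfolding W_def by (rule card_Union_le_sum_card)
  also have "\<dots> \<le> (\<Sum>b\<in>M0. 2)" by (rule sum_mono) (use bb in auto)
  finally have cW: "card W \<le> 2 * N" using M0 by simp
  have tD: "t \<le> D"
  proof -
    have "t \<le> t ^ 2" using t by (simp add: power2_eq_square)
    also have "\<dots> \<le> 2 * t ^ 2 * Y ^ (t - 1)" using Y1 by simp
    finally show ?thesis unfolding D_def .
  qed
  define H where "H = {v\<in>W. D \<le> card (nb W E v)}"
  have hv: "card H * D ^ t \<le> t ^ t * (t - 1) * card W ^ t"
    unfolding H_def by (rule heavy[OF G nK WV t tD])
  have cH: "card H < N"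
  proof (rule ccontr)
    assume "\<not> ?thesis"
    hence "N * D ^ t \<le> card H * D ^ t" by simp
    also have "\<dots> \<le> t ^ t * (t - 1) * card W ^ t" by (rule hv)
    also have "\<dots> \<le> t ^ t * (t - 1) * (2 * N) ^ t"
    proof -
      have "card W ^ t \<le> (2 * N) ^ t" using cW by (rule power_mono) simp
      thus ?thesis by (rule mult_le_mono2)
    qed
    finally have "Y ^ t * (2 * t ^ 2 * Y ^ (t - 1)) ^ t \<le> t ^ t * (t - 1) * (2 * Y ^ t) ^ t"
      unfolding N_def D_def .
    thus False by (rule arith1[OF t Y1])
  qed
  have fW: "finite W" using WV fV by (rule finite_subset)
  have "\<exists>e\<in>M0. e \<inter> H = {}"
  proof (rule ccontr)
    assume "\<not> ?thesis"
    hence ex: "\<forall>b\<in>M0. \<exists>v. v \<in> b \<inter> H" by blast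
    define f where "f b = (SOME v. v \<in> b \<inter> H)" for b
    have fb: "f b \<in> b \<inter> H" if "b \<in> M0" for b
    proof -
      have "\<exists>v. v \<in> b \<inter> H" using ex that by blast
      thus ?thesis unfolding f_def by (rule someI_ex)
    qed
    have "inj_on f M0"
    proof (rule inj_onI)
      fix a b assume ab: "a \<in> M0" "b \<in> M0" "f a = f b"
      hence "f a \<in> a \<inter> b" using fb[OF ab(1)] fb[OF ab(2)] by auto
      thus "a = b" using dj ab by blast
    qed
    moreover have "f ` M0 \<subseteq> H" using fb by blast
    moreover have "finite H" unfolding H_def using fW by simp
    ultimately have "card M0 \<le> card H" by (rule card_inj_on_le)
    thus False using cH M0 by simp
  qed
  then obtain e where e: "e \<in> M0" "e \<inter> H = {}" by blast
  have eW: "e \<subseteq> W" using e unfolding W_def by blast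
  have ce: "card e \<le> 2" using e bb by blast
  have fe: "finite e" using eW fW by (rule finite_subset)
  define Conf where "Conf = {b\<in>M0. b \<noteq> e \<and> (\<exists>x\<in>e. \<exists>y\<in>b. E x y)}"
  have cConf: "card Conf \<le> 2 * D"
  proof -
    have ex: "\<forall>b\<in>Conf. \<exists>y. y \<in> b \<and> (\<exists>x\<in>e. E x y)" unfolding Conf_def by blast
    define g where "g b = (SOME y. y \<in> b \<and> (\<exists>x\<in>e. E x y))" for b
    have gb: "g b \<in> b \<and> (\<exists>x\<in>e. E x (g b))" if "b \<in> Conf" for b
    proof -
      have "\<exists>y. y \<in> b \<and> (\<exists>x\<in>e. E x y)" using ex that by blast
      thus ?thesis unfolding g_def by (rule someI_ex)
    qed
    have "inj_on g Conf"
    proof (rule inj_onI)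
      fix a b assume ab: "a \<in> Conf" "b \<in> Conf" "g a = g b"
      hence "g a \<in> a \<inter> b" using gb[OF ab(1)] gb[OF ab(2)] by auto
      moreover have "a \<in> M0" "b \<in> M0" using ab unfolding Conf_def by auto
      ultimately show "a = b" using dj by blast
    qed
    moreover have "g ` Conf \<subseteq> (\<Union>x\<in>e. nb W E x)"
    proof
      fix z assume "z \<in> g ` Conf"
      then obtain b where b: "b \<in> Conf" "z = g b" by blast
      have "z \<in> b" using gb[OF b(1)] b(2) by blast
      moreover have "b \<in> M0" using b(1) unfolding Conf_def by blast
      ultimately have "z \<in> W" unfolding W_def by blast
      thus "z \<in> (\<Union>x\<in>e. nb W E x)" using gb[OF b(1)] b(2) unfolding nb_def by blast
    qed
    moreover have "finite (\<Union>x\<in>e. nb W E x)" using fe fW unfolding nb_def by auto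
    ultimately have "card Conf \<le> card (\<Union>x\<in>e. nb W E x)" by (rule card_inj_on_le)
    also have "\<dots> \<le> (\<Sum>x\<in>e. card (nb W E x))" by (rule card_UN_le[OF fe])
    also have "\<dots> \<le> (\<Sum>x\<in>e. D)"
    proof (rule sum_mono)
      fix x assume "x \<in> e"
      hence "x \<notin> H" "x \<in> W" using e eW by auto
      thus "card (nb W E x) \<le> D" unfolding H_def by simp
    qed
    also have "\<dots> = card e * D" by simp
    also have "\<dots> \<le> 2 * D" using ce by simp
    finally show ?thesis .
  qed
  define M' where "M' = M0 - insert e Conf"
  have sub: "insert e Conf \<subseteq> M0" using e unfolding Conf_def by auto
  have "finite Conf" using finite_subset[OF sub M0(3)] by simp
  hence "card (insert e Conf) \<le> Suc (card Conf)" by (simp add: card_insert_if)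
  hence "card (insert e Conf) \<le> 1 + 2 * D" using cConf by simp
  hence "card M' \<ge> N - (1 + 2 * D)" unfolding M'_def using card_Diff_subset[OF finite_subset[OF sub M0(3)] sub] M0(2) by simp
  moreover have "1 + 2 * D + (4 * t ^ 2 + 1) ^ t * k ^ t \<le> N"
    unfolding NX D_def Y_def X_def using arith3[OF t, of k] .
  ultimately have cM': "card M' \<ge> (4 * t ^ 2 + 1) ^ t * k ^ t" by simp
  have bf': "blockfam V M'" using blockfam_sub[OF bf0] unfolding M'_def by blast
  obtain S' where S': "S' \<subseteq> M'" "card S' = k"
      "\<forall>a\<in>S'. \<forall>b\<in>S'. a \<noteq> b \<longrightarrow> (\<forall>x\<in>a. \<forall>y\<in>b. \<not> E x y)"
    using Suc.IH[OF bf' cM'] by blast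
  have eS': "e \<notin> S'" using S'(1) unfolding M'_def by blast
  have fS': "finite S'" using S'(1) M0(3) unfolding M'_def by (auto intro: finite_subset)
  have noC: "\<forall>b\<in>S'. \<forall>x\<in>e. \<forall>y\<in>b. \<not> E x y"
    using S'(1) unfolding M'_def Conf_def by blast
  have s1: "insert e S' \<subseteq> M" using S'(1) M0(1) e unfolding M'_def by blast
  have s2: "card (insert e S') = Suc k" using eS' fS' S'(2) by simp
  have s3: "\<forall>a\<in>insert e S'. \<forall>b\<in>insert e S'. a \<noteq> b \<longrightarrow> (\<forall>x\<in>a. \<forall>y\<in>b. \<not> E x y)"
  proof (intro ballI impI notI)
    fix a b x y assume a: "a \<in> insert e S'" and b: "b \<in> insert e S'" and ab: "a \<noteq> b"
      and x: "x \<in> a" and y: "y \<in> b" and xy: "E x y"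
    show False
    proof (cases "a = e")
      case True
      hence "b \<in> S'" using b ab by auto
      thus False using noC True x y xy by blast
    next
      case False
      hence aS: "a \<in> S'" using a by auto
      show False
      proof (cases "b = e")
        case True
        thus False using noC aS sym[OF xy] x y by blast
      next
        case False
        hence "b \<in> S'" using b by auto
        thus False using S'(3) aS ab x y xy by blast
      qed
    qed
  qed
  show ?case by (rule exI[of _ "insert e S'"]) (use s1 s2 s3 in simp)
qed



lemma main_lemma:
  assumes G: "simple_graph V E" and Ok: "Ok_free V E k" and nK: "\<not> has_Ktt V E t"
  shows "\<exists>X \<subseteq> V. card X \<le> (2 * (4 * t ^ 2 + 1) ^ t + 1) * k ^ t \<and>
          (\<forall>u v P. banana V E u v P \<longrightarrow> X \<inter> banana_vertices u v P \<noteq> {})"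
proof -
  have fV: "finite V" using G unfolding simple_graph_def by blast
  have t: "t \<ge> 1"
  proof (rule ccontr)
    assume "\<not> t \<ge> 1" hence "t = 0" by simp
    hence "has_Ktt V E t" unfolding has_Ktt_def by (intro exI[of _ "{}"]) simp
    thus False using nK by simp
  qed
  have k: "k \<ge> 1"
  proof (rule ccontr)
    assume "\<not> k \<ge> 1" hence "k = 0" by simp
    hence "has_Ok V E k" unfolding has_Ok_def by simp
    thus False using Ok unfolding Ok_free_def by simp
  qed
  define Dd where "Dd = Dset V E"
  define Good where "Good c \<longleftrightarrow> is_cycle V E c \<and> card (set c \<inter> Dd) \<le> 2" for c
  have goodV: "set c \<subseteq> V" if "Good c" for c using that cyc_facts(3) unfolding Good_def by blast
  have goodne: "set c \<noteq> {}" if "Good c" for c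
    using that cyc_facts(2)[of V E c] unfolding Good_def by auto
  define F1 where "F1 = {set c \<inter> Dd | c. Good c \<and> set c \<inter> Dd \<noteq> {}}"
  define C0 where "C0 = {set c | c. Good c \<and> set c \<inter> Dd = {}}"
  have F1V: "F1 \<subseteq> Pow V" unfolding F1_def using goodV by blast
  have C0V: "C0 \<subseteq> Pow V" unfolding C0_def using goodV by blast
  have fF1: "finite F1" using F1V fV by (meson finite_Pow_iff finite_subset)
  have fC0: "finite C0" using C0V fV by (meson finite_Pow_iff finite_subset)
  define Fam where "Fam = {M. M \<subseteq> F1 \<and> (\<forall>a\<in>M. \<forall>b\<in>M. a \<noteq> b \<longrightarrow> a \<inter> b = {})}"
  have "finite Fam" unfolding Fam_def using fF1 by (simp add: finite_Pow_iff)
  moreover have "{} \<in> Fam" unfolding Fam_def by simp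
  ultimately obtain M where M: "M \<in> Fam" and Mmax: "\<forall>b\<in>Fam. M \<subseteq> b \<longrightarrow> M = b"
    using finite_has_maximal[of Fam] by blast
  have MF1: "M \<subseteq> F1" and Mdj: "\<forall>a\<in>M. \<forall>b\<in>M. a \<noteq> b \<longrightarrow> a \<inter> b = {}"
    using M unfolding Fam_def by auto
  have hit1: "K \<inter> \<Union>M \<noteq> {}" if K: "K \<in> F1" for K
  proof
    assume h: "K \<inter> \<Union>M = {}"
    have "insert K M \<in> Fam" unfolding Fam_def
    proof (intro CollectI conjI)
      show "insert K M \<subseteq> F1" using K MF1 by blast
      show "\<forall>a\<in>insert K M. \<forall>b\<in>insert K M. a \<noteq> b \<longrightarrow> a \<inter> b = {}"
        using Mdj h by blast
    qed
    hence "M = insert K M" using Mmax by blast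
    hence "K \<subseteq> \<Union>M" by blast
    moreover have "K \<noteq> {}" using K unfolding F1_def by blast
    ultimately show False using h by blast
  qed
  have F1prop: "K \<subseteq> V \<and> K \<noteq> {} \<and> card K \<le> 2" if "K \<in> F1" for K
    using that goodV unfolding F1_def Good_def by blast
  have bf: "blockfam V M" unfolding blockfam_def
  proof (intro conjI)
    show "finite M" using MF1 fF1 by (rule finite_subset)
    show "\<forall>b\<in>M. b \<subseteq> V \<and> b \<noteq> {} \<and> card b \<le> 2" using MF1 F1prop by blast
    show "\<forall>a\<in>M. \<forall>b\<in>M. a \<noteq> b \<longrightarrow> a \<inter> b = {}" by (rule Mdj)
  qed
  have cM: "card M < (4 * t ^ 2 + 1) ^ t * k ^ t"
  proof (rule ccontr)
    assume "\<not> ?thesis"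
    then obtain S where S: "S \<subseteq> M" "card S = k"
      "\<forall>a\<in>S. \<forall>b\<in>S. a \<noteq> b \<longrightarrow> (\<forall>x\<in>a. \<forall>y\<in>b. \<not> E x y)"
      using comb[OF G nK t bf, of k] by force
    define cyc where "cyc K = (SOME c. Good c \<and> set c \<inter> Dd = K)" for K
    have cyc: "Good (cyc K) \<and> set (cyc K) \<inter> Dd = K" if "K \<in> F1" for K
    proof -
      have "\<exists>c. Good c \<and> set c \<inter> Dd = K" using that unfolding F1_def by blast
      thus ?thesis unfolding cyc_def by (rule someI_ex)
    qed
    have SF: "S \<subseteq> F1" using S(1) MF1 by blast
    have "has_Ok V E k"
    proof (rule mk_Ok[of S k V E cyc])
      show "finite S" using S(1) bf unfolding blockfam_def by (meson finite_subset)
      show "card S = k" by (rule S(2))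
      show "\<forall>i\<in>S. is_cycle V E (cyc i)" using cyc SF unfolding Good_def by blast
      show "\<forall>i\<in>S. \<forall>j\<in>S. i \<noteq> j \<longrightarrow> set (cyc i) \<inter> set (cyc j) = {} \<and>
              (\<forall>x \<in> set (cyc i). \<forall>y \<in> set (cyc j). \<not> E x y)"
      proof (intro ballI impI)
        fix i j assume i: "i \<in> S" and j: "j \<in> S" and ij: "i \<noteq> j"
        have ci: "Good (cyc i)" "set (cyc i) \<inter> Dd = i" using cyc SF i by blast+
        have cj: "Good (cyc j)" "set (cyc j) \<inter> Dd = j" using cyc SF j by blast+
        have dij: "i \<inter> j = {}" using Mdj S(1) i j ij by blast
        show "set (cyc i) \<inter> set (cyc j) = {} \<and> (\<forall>x \<in> set (cyc i). \<forall>y \<in> set (cyc j). \<not> E x y)"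
        proof (rule sep[OF G])
          show "is_cycle V E (cyc i)" "is_cycle V E (cyc j)" using ci cj unfolding Good_def by auto
          show "set (cyc i) \<inter> set (cyc j) \<inter> Dset V E = {}" using ci(2) cj(2) dij unfolding Dd_def by blast
          show "\<forall>x \<in> set (cyc i) \<inter> Dset V E. \<forall>y \<in> set (cyc j) \<inter> Dset V E. \<not> E x y"
            using ci(2) cj(2) S(3) i j ij unfolding Dd_def by blast
          show "set (cyc i) \<noteq> set (cyc j)"
          proof
            assume "set (cyc i) = set (cyc j)"
            hence "set (cyc i) \<inter> Dd = set (cyc j) \<inter> Dd" by simp
            hence "i = j" by (rule trans[OF sym[OF ci(2)] trans[OF _ cj(2)]])
            thus False using ij by simp
          qed
        qed
      qed
    qed
    thus False using Ok unfolding Ok_free_def by simp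
  qed
  have cC0: "card C0 < k"
  proof (rule ccontr)
    assume "\<not> ?thesis"
    hence "k \<le> card C0" by simp
    then obtain S where S: "S \<subseteq> C0" "card S = k" "finite S" by (rule obtain_subset_with_card_n)
    define cyc where "cyc Y = (SOME c. Good c \<and> set c \<inter> Dd = {} \<and> set c = Y)" for Y
    have cyc: "Good (cyc Y) \<and> set (cyc Y) \<inter> Dd = {} \<and> set (cyc Y) = Y" if "Y \<in> C0" for Y
    proof -
      have "\<exists>c. Good c \<and> set c \<inter> Dd = {} \<and> set c = Y" using that unfolding C0_def by blast
      thus ?thesis unfolding cyc_def by (rule someI_ex)
    qed
    have "has_Ok V E k"
    proof (rule mk_Ok[of S k V E cyc])
      show "finite S" by (rule S(3))
      show "card S = k" by (rule S(2))
      show "\<forall>i\<in>S. is_cycle V E (cyc i)" using cyc S(1) unfolding Good_def by blast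
      show "\<forall>i\<in>S. \<forall>j\<in>S. i \<noteq> j \<longrightarrow> set (cyc i) \<inter> set (cyc j) = {} \<and>
              (\<forall>x \<in> set (cyc i). \<forall>y \<in> set (cyc j). \<not> E x y)"
      proof (intro ballI impI)
        fix i j assume i: "i \<in> S" and j: "j \<in> S" and ij: "i \<noteq> j"
        have ci: "Good (cyc i)" "set (cyc i) \<inter> Dd = {}" "set (cyc i) = i" using cyc S(1) i by blast+
        have cj: "Good (cyc j)" "set (cyc j) \<inter> Dd = {}" "set (cyc j) = j" using cyc S(1) j by blast+
        show "set (cyc i) \<inter> set (cyc j) = {} \<and> (\<forall>x \<in> set (cyc i). \<forall>y \<in> set (cyc j). \<not> E x y)"
        proof (rule sep[OF G])
          show "is_cycle V E (cyc i)" "is_cycle V E (cyc j)" using ci cj unfolding Good_def by auto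
          show "set (cyc i) \<inter> set (cyc j) \<inter> Dset V E = {}" using ci(2) unfolding Dd_def by blast
          show "\<forall>x \<in> set (cyc i) \<inter> Dset V E. \<forall>y \<in> set (cyc j) \<inter> Dset V E. \<not> E x y"
            using ci(2) unfolding Dd_def by blast
          show "set (cyc i) \<noteq> set (cyc j)" using ci(3) cj(3) ij by simp
        qed
      qed
    qed
    thus False using Ok unfolding Ok_free_def by simp
  qed
  define pick where "pick Y = (SOME x. x \<in> Y)" for Y :: "'a set"
  have pick: "pick Y \<in> Y" if "Y \<in> C0" for Y
  proof -
    have "Y \<noteq> {}" using that goodne unfolding C0_def by blast
    hence "\<exists>x. x \<in> Y" by blast
    thus ?thesis unfolding pick_def by (rule someI_ex)
  qed
  define X where "X = \<Union>M \<union> pick ` C0"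
  have XV: "X \<subseteq> V"
  proof -
    have "\<Union>M \<subseteq> V" using MF1 F1prop by blast
    moreover have "pick ` C0 \<subseteq> V" using pick C0V by blast
    ultimately show ?thesis unfolding X_def by blast
  qed
  have c1: "card X \<le> card (\<Union>M) + card (pick ` C0)" unfolding X_def by (rule card_Un_le)
  have "card (\<Union>M) \<le> (\<Sum>b\<in>M. card b)" by (rule card_Union_le_sum_card)
  also have "\<dots> \<le> (\<Sum>b\<in>M. 2)" by (rule sum_mono) (use MF1 F1prop in blast)
  also have "\<dots> = 2 * card M" by simp
  finally have c2: "card (\<Union>M) \<le> 2 * card M" .
  have c3: "card (pick ` C0) \<le> card C0" using fC0 by (rule card_image_le)
  have "card X \<le> 2 * card M + card C0" using c1 c2 c3 by linarith
  also have "\<dots> \<le> 2 * ((4 * t ^ 2 + 1) ^ t * k ^ t) + k ^ t"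
  proof -
    have "k \<le> k ^ t" using k t by (simp add: self_le_power)
    thus ?thesis using cM cC0 by linarith
  qed
  also have "\<dots> = (2 * (4 * t ^ 2 + 1) ^ t + 1) * k ^ t" by (simp add: algebra_simps)
  finally have cX: "card X \<le> (2 * (4 * t ^ 2 + 1) ^ t + 1) * k ^ t" .
  have hitb: "X \<inter> banana_vertices u v P \<noteq> {}" if b: "banana V E u v P" for u v P
  proof -
    obtain c where c: "is_cycle V E c" "set c \<subseteq> banana_vertices u v P" "card (set c \<inter> Dset V E) \<le> 2"
      using banana_cycle[OF G b] by blast
    have gc: "Good c" using c unfolding Good_def Dd_def by simp
    show ?thesis
    proof (cases "set c \<inter> Dd = {}")
      case True
      hence "set c \<in> C0" unfolding C0_def using gc by blast
      hence "pick (set c) \<in> set c" "pick (set c) \<in> X" using pick unfolding X_def by auto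
      thus ?thesis using c(2) by blast
    next
      case False
      hence "set c \<inter> Dd \<in> F1" unfolding F1_def using gc by (intro CollectI exI[of _ c]) simp
      hence "(set c \<inter> Dd) \<inter> \<Union>M \<noteq> {}" by (rule hit1)
      then obtain x where "x \<in> set c" "x \<in> \<Union>M" by blast
      thus ?thesis using c(2) unfolding X_def by blast
    qed
  qed
  show ?thesis
  proof (intro exI[of _ X] conjI allI impI)
    show "X \<subseteq> V" by (rule XV)
    show "card X \<le> (2 * (4 * t ^ 2 + 1) ^ t + 1) * k ^ t" by (rule cX)
    fix u v P assume "banana V E u v P"
    thus "X \<inter> banana_vertices u v P \<noteq> {}" by (rule hitb)
  qed
qed

theorem mainTheorem8:
  shows "\<exists>f :: nat \<Rightarrow> nat \<Rightarrow> nat.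
    (\<forall>t. \<exists>C :: nat. \<forall>k \<ge> 1. f t k \<le> C * k ^ t) \<and>
    (\<forall>t k (V :: nat set) E. simple_graph V E \<and> Ok_free V E k \<and> \<not> has_Ktt V E t \<longrightarrow>
       (\<exists>X \<subseteq> V. card X \<le> f t k \<and>
          (\<forall>u v P. banana V E u v P \<longrightarrow> X \<inter> banana_vertices u v P \<noteq> {})))"
proof (rule exI[of _ "\<lambda>t k. (2 * (4 * t ^ 2 + 1) ^ t + 1) * k ^ t"], intro conjI allI impI)
  fix t show "\<exists>C :: nat. \<forall>k \<ge> 1. (2 * (4 * t ^ 2 + 1) ^ t + 1) * k ^ t \<le> C * k ^ t"
    by (rule exI[of _ "2 * (4 * t ^ 2 + 1) ^ t + 1"]) simp
next
  fix t k and V :: "nat set" and E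
  assume h: "simple_graph V E \<and> Ok_free V E k \<and> \<not> has_Ktt V E t"
  show "\<exists>X \<subseteq> V. card X \<le> (2 * (4 * t ^ 2 + 1) ^ t + 1) * k ^ t \<and>
          (\<forall>u v P. banana V E u v P \<longrightarrow> X \<inter> banana_vertices u v P \<noteq> {})"
    using h by (intro main_lemma) simp_all
qed

end
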